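(* Let $H:\mathcal{M}\to(-\infty,\infty]$ be proper, let $\tau_n>0$ with $\tau_n\to0$, and let $\mu_n,\nu_n\in\mathcal{M}$ with $\nu_n\in J_{\tau_n}[\mu_n]$ for all $n$. Suppose there is a constant $C$ with $W_2(\mu_n,\nu_n)\le C\tau_n$ for all $n$, and that $\mu_n$ converges narrowly to $\mu$. Then $\nu_n$ converges narrowly to $\mu$. Moreover, choosing $\gamma_n\in\Gamma_o(\mu_n,\nu_n)$, $$\bigcap_{m=1}^\infty\overline{co}\Big(\Big\{\frac{Id-\bar\gamma^{\nu_n}_{\mu_n}}{\tau_n}\,\mu_n: n\ge m\Big\}\Big)=\bigcap_{m=1}^\infty\overline{co}\Big(\Big\{\frac{\bar\gamma^{\mu_n}_{\nu_n}-Id}{\tau_n}\,\nu_n: n\ge m\Big\}\Big),$$ where the barycentric projections are taken with respect to $\gamma_n$ and $\overline{co}$ denotes the weak*-closed convex hull.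
   Context: $\mathcal{M}$ is the set of Borel probability measures on $\mathbb{R}^D$ with finite second moment, with the 2-Wasserstein distance $W_2$; $\Gamma_o(\mu,\nu)$ is the set of optimal couplings for $W_2$. For $\gamma\in\Gamma_o(\mu,\nu)$ the barycentric projections are characterized by $\int\psi(x)\bar\gamma^\nu_\mu(x)\,d\mu(x)=\int\psi(x)\,y\,d\gamma(x,y)$ and $\int\psi(y)\bar\gamma^\mu_\nu(y)\,d\nu(y)=\int\psi(y)\,x\,d\gamma(x,y)$ for all bounded continuous $\psi$. For $\tau>0$, $H_\tau(\mu)=\inf_{\nu}\{\frac{1}{2\tau}W_2^2(\mu,\nu)+H(\nu)\}$ and $J_\tau[\mu]$ is the set of $\nu$ attaining this infimum. Narrow convergence means convergence against all bounded continuous functions. For $w\in L^1(\mu;\mathbb{R}^D)$, $w\mu$ denotes the $\mathbb{R}^D$-valued measure with density $w$ w.r.t. $\mu$; such vector measures are given the weak* topology as duals of $C_c(\mathbb{R}^D;\mathbb{R}^D)$. *)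

theory Defs
  imports "HOL-Probability.Probability"
begin

text \<open>The set M of Borel probability measures on the Euclidean space 'a with finite second moment.\<close>
definition P2 :: "('a::euclidean_space) measure set" where
  "P2 = {\<mu>. prob_space \<mu> \<and> sets \<mu> = sets borel \<and> integrable \<mu> (\<lambda>x. norm x ^ 2)}"

definition Pborel :: "('a::euclidean_space) measure set" where
  "Pborel = {\<mu>. prob_space \<mu> \<and> sets \<mu> = sets borel}"

definition couplings :: "('a::euclidean_space) measure \<Rightarrow> 'a measure \<Rightarrow> ('a \<times> 'a) measure set" where
  "couplings \<mu> \<nu> = {\<gamma>. prob_space \<gamma> \<and> sets \<gamma> = sets (borel \<Otimes>\<^sub>M borel)
      \<and> distr \<gamma> borel fst = \<mu> \<and> distr \<gamma> borel snd = \<nu>}"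

definition transport_cost :: "(('a::euclidean_space) \<times> 'a) measure \<Rightarrow> real" where
  "transport_cost \<gamma> = (\<integral>p. (norm (fst p - snd p))^2 \<partial>\<gamma>)"

definition W2sq :: "('a::euclidean_space) measure \<Rightarrow> 'a measure \<Rightarrow> real" where
  "W2sq \<mu> \<nu> = Inf (transport_cost ` couplings \<mu> \<nu>)"

definition W2 :: "('a::euclidean_space) measure \<Rightarrow> 'a measure \<Rightarrow> real" where
  "W2 \<mu> \<nu> = sqrt (W2sq \<mu> \<nu>)"

definition opt_couplings :: "('a::euclidean_space) measure \<Rightarrow> 'a measure \<Rightarrow> ('a \<times> 'a) measure set" where
  "opt_couplings \<mu> \<nu> = {\<gamma> \<in> couplings \<mu> \<nu>. transport_cost \<gamma> = W2sq \<mu> \<nu>}"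

definition bcont :: "(('a::euclidean_space) \<Rightarrow> real) set" where
  "bcont = {\<psi>. continuous_on UNIV \<psi> \<and> bounded (range \<psi>)}"

text \<open>b is a barycentric projection of \<gamma> onto the second marginal, as a function of the first
  variable (i.e. \<bar>\<gamma>^\<nu>_\<mu>): b \<in> L^1(\<mu>) and for all bounded continuous \<psi>,
  \<integral>\<psi>(x) b(x) d\<mu> = \<integral>\<psi>(x) y d\<gamma>(x,y).\<close>
definition is_bary_fst :: "(('a::euclidean_space) \<times> 'a) measure \<Rightarrow> 'a measure \<Rightarrow> ('a \<Rightarrow> 'a) \<Rightarrow> bool" where
  "is_bary_fst \<gamma> \<mu> b \<longleftrightarrow> integrable \<mu> b \<and>
     (\<forall>\<psi>\<in>bcont. (\<integral>x. \<psi> x *\<^sub>R b x \<partial>\<mu>) = (\<integral>p. \<psi> (fst p) *\<^sub>R snd p \<partial>\<gamma>))"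

text \<open>c is the barycentric projection \<bar>\<gamma>^\<mu>_\<nu> (function of the second variable):
  \<integral>\<psi>(y) c(y) d\<nu> = \<integral>\<psi>(y) x d\<gamma>(x,y).\<close>
definition is_bary_snd :: "(('a::euclidean_space) \<times> 'a) measure \<Rightarrow> 'a measure \<Rightarrow> ('a \<Rightarrow> 'a) \<Rightarrow> bool" where
  "is_bary_snd \<gamma> \<nu> c \<longleftrightarrow> integrable \<nu> c \<and>
     (\<forall>\<psi>\<in>bcont. (\<integral>y. \<psi> y *\<^sub>R c y \<partial>\<nu>) = (\<integral>p. \<psi> (snd p) *\<^sub>R fst p \<partial>\<gamma>))"

definition proper_fun :: "(('a::euclidean_space) measure \<Rightarrow> ereal) \<Rightarrow> bool" where
  "proper_fun H \<longleftrightarrow> (\<forall>\<mu>\<in>P2. H \<mu> \<noteq> -\<infinity>) \<and> (\<exists>\<mu>\<in>P2. H \<mu> \<noteq> \<infinity>)"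

definition Htau :: "(('a::euclidean_space) measure \<Rightarrow> ereal) \<Rightarrow> real \<Rightarrow> 'a measure \<Rightarrow> ereal" where
  "Htau H \<tau> \<mu> = (INF \<nu>\<in>P2. ereal (W2sq \<mu> \<nu> / (2 * \<tau>)) + H \<nu>)"

definition Jtau :: "(('a::euclidean_space) measure \<Rightarrow> ereal) \<Rightarrow> real \<Rightarrow> 'a measure \<Rightarrow> 'a measure set" where
  "Jtau H \<tau> \<mu> = {\<nu>\<in>P2. ereal (W2sq \<mu> \<nu> / (2 * \<tau>)) + H \<nu> = Htau H \<tau> \<mu>}"

definition narrow_conv :: "(nat \<Rightarrow> ('a::euclidean_space) measure) \<Rightarrow> 'a measure \<Rightarrow> bool" where
  "narrow_conv \<mu>s \<mu> \<longleftrightarrow>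
     (\<forall>f\<in>bcont. (\<lambda>n. \<integral>x. f x \<partial>(\<mu>s n)) \<longlonglongrightarrow> (\<integral>x. f x \<partial>\<mu>))"

definition Cc :: "(('a::euclidean_space) \<Rightarrow> 'a) set" where
  "Cc = {\<phi>. continuous_on UNIV \<phi> \<and> compact (closure {x. \<phi> x \<noteq> 0})}"

text \<open>A functional on C_c(R^D;R^D) is represented as a function on all of 'a \<Rightarrow> 'a that
  vanishes outside C_c. The (topological) dual of C_c (with its standard inductive-limit
  topology) consists of the linear functionals L such that for every compact K there is C
  with |L \<phi>| \<le> C sup|\<phi>| for all \<phi> \<in> C_c supported in K.\<close>
definition Cc_dual :: "((('a::euclidean_space) \<Rightarrow> 'a) \<Rightarrow> real) set" where
  "Cc_dual = {L. (\<forall>\<phi>. \<phi> \<notin> Cc \<longrightarrow> L \<phi> = 0)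
     \<and> (\<forall>\<phi>\<in>Cc. \<forall>\<psi>\<in>Cc. \<forall>a b. L (\<lambda>x. a *\<^sub>R \<phi> x + b *\<^sub>R \<psi> x) = a * L \<phi> + b * L \<psi>)
     \<and> (\<forall>K. compact K \<longrightarrow> (\<exists>C. \<forall>\<phi>\<in>Cc. {x. \<phi> x \<noteq> 0} \<subseteq> K \<longrightarrow>
            \<bar>L \<phi>\<bar> \<le> C * (SUP x. norm (\<phi> x))))}"

text \<open>The vector measure w\<mu>, acting on \<phi> \<in> C_c as \<integral> \<phi> \<cdot> w d\<mu>.\<close>
definition vmeas :: "('a::euclidean_space) measure \<Rightarrow> ('a \<Rightarrow> 'a) \<Rightarrow> ('a \<Rightarrow> 'a) \<Rightarrow> real" where
  "vmeas \<mu> w = (\<lambda>\<phi>. if \<phi> \<in> Cc then (\<integral>x. \<phi> x \<bullet> w x \<partial>\<mu>) else 0)"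

definition fconv_hull :: "(('b \<Rightarrow> real) set) \<Rightarrow> ('b \<Rightarrow> real) set" where
  "fconv_hull S = {f. \<exists>(n::nat) c L. (\<forall>i<n. c i \<ge> 0 \<and> L i \<in> S) \<and> (\<Sum>i<n. c i) = 1
       \<and> f = (\<lambda>\<phi>. \<Sum>i<n. c i * L i \<phi>)}"

text \<open>Weak*-closed convex hull in the dual of C_c: the closure of the convex hull in the
  topology of pointwise convergence (product topology on functionals), intersected with the
  dual space (the weak* topology is the subspace topology).\<close>
definition wstar_cch :: "(((('a::euclidean_space) \<Rightarrow> 'a) \<Rightarrow> real) set) \<Rightarrow> (('a \<Rightarrow> 'a) \<Rightarrow> real) set" where
  "wstar_cch S = closure (fconv_hull S) \<inter> Cc_dual"

end

theory Submission
  imports Defs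
begin

lemma conv_close:
  fixes L L' :: "nat \<Rightarrow> 'b \<Rightarrow> real" and f :: "'b \<Rightarrow> real"
  assumes lim: "\<And>\<phi>. (\<lambda>n. L n \<phi> - L' n \<phi>) \<longlonglongrightarrow> 0"
    and cl: "\<And>m. f \<in> closure (fconv_hull {L n | n. n \<ge> m})"
  shows "f \<in> closure (fconv_hull {L' n | n. n \<ge> m})"
  unfolding closure_iff_nhds_not_empty
proof (intro allI impI)
  fix A S assume SA: "S \<subseteq> A" and oS: "open S" and fS: "f \<in> S"
  from oS have "openin (product_topology (\<lambda>i. euclidean) UNIV) S" by (simp add: open_fun_def)
  from product_topology_open_contains_basis[OF this fS] obtain X where
    X: "f \<in> (\<Pi>\<^sub>E i\<in>UNIV. X i)" "\<And>i. openin euclidean (X i)" "finite {i. X i \<noteq> topspace euclidean}"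
       "(\<Pi>\<^sub>E i\<in>UNIV. X i) \<subseteq> S" by blast
  define F where "F = {i. X i \<noteq> UNIV}"
  have fF: "finite F" using X(3) by (simp add: F_def)
  have "\<forall>i\<in>F. \<exists>e>0. ball (f i) e \<subseteq> X i"
  proof
    fix i assume "i \<in> F"
    have "open (X i)" using X(2) by simp
    moreover have "f i \<in> X i" using X(1) by auto
    ultimately show "\<exists>e>0. ball (f i) e \<subseteq> X i" using open_contains_ball by blast
  qed
  then obtain e where e: "\<And>i. i \<in> F \<Longrightarrow> e i > 0 \<and> ball (f i) (e i) \<subseteq> X i" by metis
  define r where "r = Min (insert 1 (e ` F))"
  have rpos: "r > 0" unfolding r_def using fF e by (subst Min_gr_iff) auto
  have rle: "\<And>i. i \<in> F \<Longrightarrow> r \<le> e i" unfolding r_def using fF by (intro Min_le) auto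
  have "\<forall>\<^sub>F n in sequentially. \<forall>i\<in>F. dist (L n i - L' n i) 0 < r/2"
  proof (intro eventually_ball_finite fF ballI)
    fix i
    have "r/2 > 0" using rpos by simp
    then show "\<forall>\<^sub>F n in sequentially. dist (L n i - L' n i) 0 < r/2"
      using lim[of i] unfolding tendsto_iff by blast
  qed
  then obtain m' where m': "\<And>n i. n \<ge> m' \<Longrightarrow> i \<in> F \<Longrightarrow> \<bar>L n i - L' n i\<bar> < r/2"
    by (auto simp: eventually_sequentially)
  define M where "M = max m m'"
  define V where "V = {g::'b\<Rightarrow>real. \<forall>i\<in>F. g (id i) \<in> ball (f i) (r/2)}"
  have oV: "open V" unfolding V_def by (rule product_topology_basis') (use fF in auto)
  have fV: "f \<in> V" unfolding V_def using rpos by auto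
  from cl[of M] oV fV obtain g where gV: "g \<in> V" and gH: "g \<in> fconv_hull {L n | n. n \<ge> M}"
    unfolding closure_iff_nhds_not_empty by blast
  from gH obtain N :: nat and c :: "nat \<Rightarrow> real" and Lk :: "nat \<Rightarrow> 'b \<Rightarrow> real" where H: "\<forall>i<N. c i \<ge> 0 \<and> Lk i \<in> {L n | n. n \<ge> M}" "(\<Sum>i<N. c i) = 1"
     "g = (\<lambda>\<phi>. \<Sum>i<N. c i * Lk i \<phi>)" unfolding fconv_hull_def by blast
  have "\<forall>k<N. \<exists>n. n \<ge> M \<and> Lk k = L n" using H(1) by blast
  then obtain nk where nk: "\<And>k. k < N \<Longrightarrow> nk k \<ge> M \<and> Lk k = L (nk k)" by metis
  define g' where "g' = (\<lambda>\<phi>. \<Sum>k<N. c k * L' (nk k) \<phi>)"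
  have g'H: "g' \<in> fconv_hull {L' n | n. n \<ge> m}"
    unfolding fconv_hull_def g'_def
  proof (rule CollectI, intro exI conjI)
    show "\<forall>i<N. 0 \<le> c i \<and> L' (nk i) \<in> {L' n |n. m \<le> n}"
      using H(1) nk M_def by fastforce
  qed (use H(2) in auto)
  have "g' \<in> (\<Pi>\<^sub>E i\<in>UNIV. X i)"
  proof (simp add: PiE_def Pi_def, intro allI)
    fix i show "g' i \<in> X i"
    proof (cases "i \<in> F")
      case False then show ?thesis by (simp add: F_def)
    next
      case True
      have gi: "g i = (\<Sum>k<N. c k * L (nk k) i)" unfolding H(3) by (rule sum.cong) (auto simp: nk)
      have "\<bar>g' i - g i\<bar> = \<bar>\<Sum>k<N. c k * (L' (nk k) i - L (nk k) i)\<bar>"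
        unfolding gi g'_def by (simp add: sum_subtractf[symmetric] right_diff_distrib)
      also have "\<dots> \<le> (\<Sum>k<N. c k * \<bar>L' (nk k) i - L (nk k) i\<bar>)"
        by (rule order_trans[OF sum_abs]) (use H(1) in \<open>simp add: abs_mult\<close>)
      also have "\<dots> \<le> (\<Sum>k<N. c k * (r/2))"
        apply (rule sum_mono) apply (rule mult_left_mono)
        using m'[OF _ True] nk M_def H(1) by (auto simp: abs_minus_commute less_imp_le)
      also have "\<dots> = (\<Sum>k<N. c k) * (r/2)" by (simp add: sum_distrib_right)
      also have "\<dots> = r/2" using H(2) by simp
      finally have "\<bar>g' i - g i\<bar> \<le> r/2" .
      moreover have "\<bar>g i - f i\<bar> < r/2" using gV True unfolding V_def by (auto simp: dist_real_def abs_minus_commute)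
      ultimately have "dist (f i) (g' i) < e i" using rle[OF True] by (simp add: dist_real_def abs_if split: if_splits)
      then show ?thesis using e[OF True] by auto
    qed
  qed
  then have "g' \<in> A" using X(4) SA by blast
  then show "fconv_hull {L' n | n. n \<ge> m} \<inter> A \<noteq> {}" using g'H by blast
qed

lemma le_1_sq: "(t::real) \<le> 1 + t^2"
proof -
  have "0 \<le> (t - 1/2)^2" by simp
  then show ?thesis by (simp add: power2_eq_square algebra_simps)
qed

lemma P2D: assumes "\<mu> \<in> P2" shows "prob_space \<mu>" "sets \<mu> = sets borel" "integrable \<mu> (\<lambda>x. norm x ^ 2)"
  using assms by (auto simp: P2_def)

lemma P2_int_id: assumes "\<mu> \<in> P2" shows "integrable \<mu> (\<lambda>x. x)"
proof -
  interpret prob_space \<mu> using P2D(1)[OF assms] .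
  have "integrable \<mu> (\<lambda>x. 1 + norm x ^ 2)" using P2D(3)[OF assms] by simp
  then show ?thesis
  proof (rule Bochner_Integration.integrable_bound)
    show "(\<lambda>x. x) \<in> borel_measurable \<mu>" using P2D(2)[OF assms] by (simp add: measurable_ident_sets)
    show "AE x in \<mu>. norm x \<le> norm (1 + norm x ^ 2)" using le_1_sq by auto
  qed
qed

lemma coupD: assumes "\<gamma> \<in> couplings \<mu> \<nu>"
  shows "prob_space \<gamma>" "sets \<gamma> = sets (borel :: ('a::euclidean_space \<times> 'a) measure)" "distr \<gamma> borel fst = \<mu>" "distr \<gamma> borel snd = \<nu>"
proof -
  have "sets \<gamma> = sets (borel \<Otimes>\<^sub>M (borel::'a measure))" using assms by (simp add: couplings_def)
  then show "sets \<gamma> = sets (borel :: ('a::euclidean_space \<times> 'a) measure)" by (simp only: borel_prod)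
qed (use assms in \<open>simp_all add: couplings_def\<close>)

lemma coup_meas: assumes "\<gamma> \<in> couplings \<mu> \<nu>" and "F \<in> borel_measurable borel"
  shows "F \<in> borel_measurable \<gamma>"
  by (subst measurable_cong_sets[OF coupD(2)[OF assms(1)] refl]) (rule assms(2))

lemma coup_fst: assumes "\<gamma> \<in> couplings \<mu> \<nu>" shows "fst \<in> measurable \<gamma> borel" "snd \<in> measurable \<gamma> borel"
  by (rule coup_meas[OF assms], intro borel_measurable_continuous_onI continuous_intros)+

lemma coup_int:
  fixes g :: "'a::euclidean_space \<Rightarrow> 'b::{banach, second_countable_topology}"
  assumes "\<gamma> \<in> couplings \<mu> \<nu>" and g: "g \<in> borel_measurable borel"
  shows "integrable \<mu> g \<longleftrightarrow> integrable \<gamma> (\<lambda>p. g (fst p))"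
    "integral\<^sup>L \<mu> g = (\<integral>p. g (fst p) \<partial>\<gamma>)"
    "integrable \<nu> g \<longleftrightarrow> integrable \<gamma> (\<lambda>p. g (snd p))"
    "integral\<^sup>L \<nu> g = (\<integral>p. g (snd p) \<partial>\<gamma>)"
  using integrable_distr_eq[OF coup_fst(1)[OF assms(1)] g] integral_distr[OF coup_fst(1)[OF assms(1)] g]
    integrable_distr_eq[OF coup_fst(2)[OF assms(1)] g] integral_distr[OF coup_fst(2)[OF assms(1)] g]
    coupD(3,4)[OF assms(1)] by auto

lemma coup_P2:
  assumes "\<gamma> \<in> couplings \<mu> \<nu>" "\<mu> \<in> P2" "\<nu> \<in> P2"
  shows "integrable \<gamma> fst" "integrable \<gamma> snd" "integrable \<gamma> (\<lambda>p. norm (fst p - snd p) ^ 2)"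
proof -
  have m1: "(\<lambda>x::'a. x) \<in> borel_measurable borel" by (rule measurable_ident_sets) simp
  have m2: "(\<lambda>x::'a. norm x ^ 2) \<in> borel_measurable borel" by (intro borel_measurable_continuous_onI continuous_intros)
  show i1: "integrable \<gamma> fst" using coup_int(1)[OF assms(1) m1] P2_int_id[OF assms(2)] by (simp only: eta_contract_eq)
  show i2: "integrable \<gamma> snd" using coup_int(3)[OF assms(1) m1] P2_int_id[OF assms(3)] by (simp only: eta_contract_eq)
  have a: "integrable \<gamma> (\<lambda>p. norm (fst p) ^ 2)" using coup_int(1)[OF assms(1) m2] P2D(3)[OF assms(2)] by blast
  have b: "integrable \<gamma> (\<lambda>p. norm (snd p) ^ 2)" using coup_int(3)[OF assms(1) m2] P2D(3)[OF assms(3)] by blast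
  have "integrable \<gamma> (\<lambda>p. 2 * norm (fst p) ^ 2 + 2 * norm (snd p) ^ 2)" using a b by simp
  then show "integrable \<gamma> (\<lambda>p. norm (fst p - snd p) ^ 2)"
  proof (rule Bochner_Integration.integrable_bound)
    show "(\<lambda>p. norm (fst p - snd p) ^ 2) \<in> borel_measurable \<gamma>"
      by (rule coup_meas[OF assms(1)]) (intro borel_measurable_continuous_onI continuous_intros)
    show "AE x in \<gamma>. norm (norm (fst x - snd x) ^ 2) \<le> norm (2 * norm (fst x) ^ 2 + 2 * norm (snd x) ^ 2)"
    proof (intro AE_I2)
      fix x :: "'a \<times> 'a"
      have t: "norm (fst x - snd x) \<le> norm (fst x) + norm (snd x)" by (rule norm_triangle_ineq4)
      have "norm (fst x - snd x) ^ 2 \<le> (norm (fst x) + norm (snd x))^2"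
        by (rule power_mono[OF t]) simp
      also have "\<dots> \<le> 2 * norm (fst x) ^ 2 + 2 * norm (snd x) ^ 2"
      proof -
        have "0 \<le> (norm (fst x) - norm (snd x))^2" by simp
        then show ?thesis by (simp add: power2_eq_square algebra_simps)
      qed
      finally show "norm (norm (fst x - snd x) ^ 2) \<le> norm (2 * norm (fst x) ^ 2 + 2 * norm (snd x) ^ 2)" by simp
    qed
  qed
qed

lemma int_scale_bdd:
  fixes f :: "'b \<Rightarrow> 'a::euclidean_space"
  assumes "integrable M f" "h \<in> borel_measurable M" "\<And>x. \<bar>h x\<bar> \<le> B"
  shows "integrable M (\<lambda>x. h x *\<^sub>R f x)"
proof -
  have "integrable M (\<lambda>x. B *\<^sub>R f x)" using assms(1) by simp
  then show ?thesis
  proof (rule Bochner_Integration.integrable_bound)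
    show "(\<lambda>x. h x *\<^sub>R f x) \<in> borel_measurable M" using assms(1,2) by (simp add: borel_measurable_integrable)
    show "AE x in M. norm (h x *\<^sub>R f x) \<le> norm (B *\<^sub>R f x)"
      using assms(3) by (auto intro!: mult_right_mono order_trans[OF _ abs_ge_self])
  qed
qed

lemma int_inner_bdd:
  fixes f g :: "'b \<Rightarrow> 'a::euclidean_space"
  assumes "integrable M f" "g \<in> borel_measurable M" "\<And>x. norm (g x) \<le> B"
  shows "integrable M (\<lambda>x. g x \<bullet> f x)"
proof -
  have "integrable M (\<lambda>x. B *\<^sub>R f x)" using assms(1) by simp
  then show ?thesis
  proof (rule Bochner_Integration.integrable_bound)
    show "(\<lambda>x. g x \<bullet> f x) \<in> borel_measurable M" using assms(1,2) by (simp add: borel_measurable_integrable)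
    show "AE x in M. norm (g x \<bullet> f x) \<le> norm (B *\<^sub>R f x)"
    proof (intro AE_I2)
      fix x
      have "norm (g x \<bullet> f x) \<le> norm (g x) * norm (f x)" by (simp add: Cauchy_Schwarz_ineq2)
      also have "\<dots> \<le> \<bar>B\<bar> * norm (f x)" using assms(3)[of x] by (intro mult_right_mono) auto
      finally show "norm (g x \<bullet> f x) \<le> norm (B *\<^sub>R f x)" by simp
    qed
  qed
qed

lemma prod_coupling:
  assumes "\<mu> \<in> P2" "\<nu> \<in> P2" shows "\<mu> \<Otimes>\<^sub>M \<nu> \<in> couplings \<mu> \<nu>"
proof -
  interpret M: prob_space \<mu> using P2D(1)[OF assms(1)] .
  interpret N: prob_space \<nu> using P2D(1)[OF assms(2)] .
  have s: "sets (\<mu> \<Otimes>\<^sub>M \<nu>) = sets (borel \<Otimes>\<^sub>M borel)"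
    using P2D(2)[OF assms(1)] P2D(2)[OF assms(2)] by (rule sets_pair_measure_cong)
  have "distr (\<mu> \<Otimes>\<^sub>M \<nu>) borel fst = distr (\<mu> \<Otimes>\<^sub>M \<nu>) \<mu> fst"
    by (rule distr_cong) (use P2D(2)[OF assms(1)] in auto)
  also have "\<dots> = \<mu>" by (rule N.distr_pair_fst)
  finally have d1: "distr (\<mu> \<Otimes>\<^sub>M \<nu>) borel fst = \<mu>" .
  have "distr (\<mu> \<Otimes>\<^sub>M \<nu>) borel snd = distr (\<mu> \<Otimes>\<^sub>M \<nu>) \<nu> snd"
    by (rule distr_cong) (use P2D(2)[OF assms(2)] in auto)
  also have "\<dots> = \<nu>"
  proof (intro measure_eqI)
    fix A assume A: "A \<in> sets (distr (\<mu> \<Otimes>\<^sub>M \<nu>) \<nu> snd)"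
    from A have "emeasure (distr (\<mu> \<Otimes>\<^sub>M \<nu>) \<nu> snd) A = emeasure (\<mu> \<Otimes>\<^sub>M \<nu>) (space \<mu> \<times> A)"
      by (auto simp add: emeasure_distr space_pair_measure dest: sets.sets_into_space intro!: arg_cong2[where f=emeasure])
    with A show "emeasure (distr (\<mu> \<Otimes>\<^sub>M \<nu>) \<nu> snd) A = emeasure \<nu> A"
      by (simp add: N.emeasure_pair_measure_Times M.emeasure_space_1)
  qed simp
  finally have d2: "distr (\<mu> \<Otimes>\<^sub>M \<nu>) borel snd = \<nu>" .
  show ?thesis unfolding couplings_def
    by (intro CollectI conjI s d1 d2 prob_space_pair M.prob_space_axioms N.prob_space_axioms)
qed

lemma uc_gap:
  fixes h :: "'a::real_normed_vector \<Rightarrow> 'b::real_normed_vector"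
  assumes "uniformly_continuous_on UNIV h" "\<epsilon> > 0"
  shows "\<exists>\<delta>>0. \<forall>x y. norm (h x - h y) \<le> \<epsilon> \<or> \<delta> \<le> norm (x - y)"
proof -
  obtain d where d: "d > 0" "\<And>x x'. dist x' x < d \<Longrightarrow> dist (h x') (h x) < \<epsilon>"
    using assms unfolding uniformly_continuous_on_def by blast
  show ?thesis
  proof (intro exI[of _ d] conjI allI)
    fix x y
    show "norm (h x - h y) \<le> \<epsilon> \<or> d \<le> norm (x - y)"
      using d(2)[of y x] by (auto simp: dist_norm norm_minus_commute)
  qed (use d in auto)
qed

lemma uc_bound:
  fixes h :: "'a::real_normed_vector \<Rightarrow> 'b::real_normed_vector"
  assumes "uniformly_continuous_on UNIV h" "\<And>x. norm (h x) \<le> B" "\<epsilon> > 0"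
  shows "\<exists>\<delta>>0. \<forall>x y. norm (h x - h y) \<le> \<epsilon> + (2*B/\<delta>) * norm (x - y)
                  \<and> norm (h x - h y) \<le> \<epsilon> + (2*B/\<delta>^2) * norm (x - y)^2"
proof -
  obtain \<delta> where d: "\<delta> > 0" "\<And>x y. norm (h x - h y) \<le> \<epsilon> \<or> \<delta> \<le> norm (x - y)"
    using uc_gap[OF assms(1,3)] by blast
  have B0: "B \<ge> 0" using assms(2)[of undefined] norm_ge_zero order_trans by blast
  show ?thesis
  proof (intro exI[of _ \<delta>] conjI allI)
    fix x y
    have hb: "norm (h x - h y) \<le> 2 * B"
      using norm_triangle_ineq4[of "h x" "h y"] assms(2)[of x] assms(2)[of y] by simp
    have p1: "0 \<le> (2*B/\<delta>) * norm (x - y)" using B0 d(1) by simp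
    have p2: "0 \<le> (2*B/\<delta>^2) * norm (x - y)^2" using B0 d(1) by simp
    show "norm (h x - h y) \<le> \<epsilon> + (2*B/\<delta>) * norm (x - y)"
    proof (cases "norm (h x - h y) \<le> \<epsilon>")
      case True then show ?thesis using p1 by simp
    next
      case False
      then have dl: "\<delta> \<le> norm (x - y)" using d(2) by blast
      have "2 * B = (2*B/\<delta>) * \<delta>" using d(1) by simp
      also have "\<dots> \<le> (2*B/\<delta>) * norm (x - y)" using dl B0 d(1) by (intro mult_left_mono) auto
      finally show ?thesis using hb assms(3) by simp
    qed
    show "norm (h x - h y) \<le> \<epsilon> + (2*B/\<delta>^2) * norm (x - y)^2"
    proof (cases "norm (h x - h y) \<le> \<epsilon>")
      case True then show ?thesis using p2 by simp
    next
      case False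
      then have dl: "\<delta> \<le> norm (x - y)" using d(2) by blast
      have "\<delta>^2 \<le> norm (x - y)^2" using dl d(1) by (intro power_mono) auto
      have "2 * B = (2*B/\<delta>^2) * \<delta>^2" using d(1) by simp
      also have "\<dots> \<le> (2*B/\<delta>^2) * norm (x - y)^2" using \<open>\<delta>^2 \<le> _\<close> B0 d(1) by (intro mult_left_mono) auto
      finally show ?thesis using hb assms(3) by simp
    qed
  qed (use d in auto)
qed

lemma cs_uc:
  fixes h :: "'a::euclidean_space \<Rightarrow> 'b::real_normed_vector"
  assumes "continuous_on UNIV h" "compact K" "\<And>x. x \<notin> K \<Longrightarrow> h x = 0"
  shows "uniformly_continuous_on UNIV h" "\<exists>B. \<forall>x. norm (h x) \<le> B"
proof -
  obtain R where R: "\<forall>x\<in>K. norm x \<le> R" using compact_imp_bounded[OF assms(2)] unfolding bounded_iff by blast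
  define K' where "K' = cball (0::'a) (R + 1)"
  have cK': "compact K'" unfolding K'_def by simp
  have uK': "uniformly_continuous_on K' h"
    by (rule compact_uniformly_continuous[OF continuous_on_subset[OF assms(1)] cK']) simp
  show "uniformly_continuous_on UNIV h"
    unfolding uniformly_continuous_on_def
  proof (intro allI impI)
    fix e :: real assume e: "e > 0"
    obtain d where d: "d > 0" "\<forall>x\<in>K'. \<forall>x'\<in>K'. dist x' x < d \<longrightarrow> dist (h x') (h x) < e"
      using uK' e unfolding uniformly_continuous_on_def by blast
    show "\<exists>d>0. \<forall>x\<in>UNIV. \<forall>x'\<in>UNIV. dist x' x < d \<longrightarrow> dist (h x') (h x) < e"
    proof (intro exI[of _ "min d 1"] conjI ballI impI)
      fix x x' :: 'a assume dx: "dist x' x < min d 1"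
      show "dist (h x') (h x) < e"
      proof (cases "x \<in> K \<or> x' \<in> K")
        case False then show ?thesis using assms(3) e by auto
      next
        case True
        have "norm x \<le> R \<or> norm x' \<le> R" using True R by blast
        moreover have "\<bar>norm x - norm x'\<bar> < 1" using dx norm_triangle_ineq3[of x x'] by (simp add: dist_norm norm_minus_commute)
        ultimately have "x \<in> K' \<and> x' \<in> K'" unfolding K'_def by auto
        moreover have "dist x' x < d" using dx by simp
        ultimately show ?thesis using d(2) by blast
      qed
    qed (use d in auto)
  qed
  have "compact (h ` K')" by (rule compact_continuous_image[OF continuous_on_subset[OF assms(1)] cK']) simp
  from compact_imp_bounded[OF this] obtain B where B: "\<forall>y\<in>h ` K'. norm y \<le> B" unfolding bounded_iff by blast
  have "\<forall>x. norm (h x) \<le> max B 0"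
  proof
    fix x show "norm (h x) \<le> max B 0"
    proof (cases "x \<in> K")
      case True then have "norm x \<le> R" using R by blast
      then have "x \<in> K'" unfolding K'_def by simp
      then have "norm (h x) \<le> B" using B by blast
      then show ?thesis by simp
    qed (use assms(3) in auto)
  qed
  then show "\<exists>B. \<forall>x. norm (h x) \<le> B" by blast
qed

lemma Cc_uc:
  assumes "\<phi> \<in> Cc"
  shows "uniformly_continuous_on UNIV \<phi>" "\<exists>B. \<forall>x. norm (\<phi> x) \<le> B" "continuous_on UNIV \<phi>"
proof -
  have c: "continuous_on UNIV \<phi>" "compact (closure {x. \<phi> x \<noteq> 0})" using assms by (auto simp: Cc_def)
  have z: "\<phi> x = 0" if "x \<notin> closure {x. \<phi> x \<noteq> 0}" for x
  proof -
    have "x \<notin> {x. \<phi> x \<noteq> 0}" using contra_subsetD[OF closure_subset that] .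
    then show ?thesis by simp
  qed
  show "uniformly_continuous_on UNIV \<phi>" "\<exists>B. \<forall>x. norm (\<phi> x) \<le> B" using cs_uc[OF c z] by blast+
  show "continuous_on UNIV \<phi>" by (rule c(1))
qed

definition cutoff :: "real \<Rightarrow> 'a::real_normed_vector \<Rightarrow> real" where
  "cutoff R x = max 0 (min 1 (R + 1 - norm x))"

lemma cutoff_lip: "\<bar>cutoff R x - cutoff R y\<bar> \<le> norm (x - y)"
proof -
  have "\<bar>norm x - norm y\<bar> \<le> norm (x - y)" by (rule norm_triangle_ineq3)
  then show ?thesis unfolding cutoff_def by (auto simp: max_def min_def split: if_splits)
qed

lemma cutoff_uc: "uniformly_continuous_on UNIV (cutoff R)"
  unfolding uniformly_continuous_on_def
proof (intro allI impI)
  fix e :: real assume "e > 0"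
  then show "\<exists>d>0. \<forall>x\<in>UNIV. \<forall>x'\<in>UNIV. dist x' x < d \<longrightarrow> dist (cutoff R x') (cutoff R x) < e"
    by (intro exI[of _ e]) (auto simp: dist_norm intro: le_less_trans[OF cutoff_lip])
qed

lemma cutoff_props: "0 \<le> cutoff R x" "cutoff R x \<le> 1" "norm x \<le> R \<Longrightarrow> cutoff R x = 1"
  "R + 1 \<le> norm x \<Longrightarrow> cutoff R x = 0"
  unfolding cutoff_def by auto

lemma est_gen:
  fixes F D :: "'b \<Rightarrow> real"
  assumes "prob_space M" "integrable M F" "integrable M D" "\<And>p. \<bar>F p\<bar> \<le> a + k * D p"
  shows "\<bar>\<integral>p. F p \<partial>M\<bar> \<le> a + k * (\<integral>p. D p \<partial>M)"
proof -
  interpret prob_space M by (rule assms(1))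
  have "\<bar>\<integral>p. F p \<partial>M\<bar> \<le> (\<integral>p. \<bar>F p\<bar> \<partial>M)" by (rule integral_abs_bound)
  also have "\<dots> \<le> (\<integral>p. a + k * D p \<partial>M)"
    by (rule integral_mono) (use assms in auto)
  also have "\<dots> = a + k * (\<integral>p. D p \<partial>M)"
    using assms(3) prob_space.prob_space[OF assms(1)] by simp
  finally show ?thesis .
qed

lemma meas_borel: assumes "sets M = sets borel" "f \<in> borel_measurable borel" shows "f \<in> borel_measurable M"
  by (subst measurable_cong_sets[OF assms(1) refl]) (rule assms(2))

lemma bary_gen:
  fixes b :: "'a::euclidean_space \<Rightarrow> 'a" and u :: "'c \<Rightarrow> 'a"
  assumes sM: "sets M = sets borel" and ib: "integrable M b" and iu: "integrable N u"
    and v: "v \<in> measurable N borel"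
    and eq: "\<forall>\<psi>\<in>bcont. (\<integral>x. \<psi> x *\<^sub>R b x \<partial>M) = (\<integral>p. \<psi> (v p) *\<^sub>R u p \<partial>N)"
    and \<phi>: "\<phi> \<in> Cc"
  shows "(\<integral>x. \<phi> x \<bullet> b x \<partial>M) = (\<integral>p. \<phi> (v p) \<bullet> u p \<partial>N)"
proof -
  obtain B where B: "\<And>x. norm (\<phi> x) \<le> B" using Cc_uc(2)[OF \<phi>] by blast
  have c\<phi>: "continuous_on UNIV \<phi>" using Cc_uc(3)[OF \<phi>] .
  have per: "(\<integral>x. (\<phi> x \<bullet> i) * (b x \<bullet> i) \<partial>M) = (\<integral>p. (\<phi> (v p) \<bullet> i) * (u p \<bullet> i) \<partial>N)"
    if i: "i \<in> Basis" for i
  proof -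
    define \<psi> where "\<psi> = (\<lambda>x. \<phi> x \<bullet> i)"
    have c\<psi>: "continuous_on UNIV \<psi>" unfolding \<psi>_def by (intro continuous_intros c\<phi>)
    have b\<psi>: "\<bar>\<psi> x\<bar> \<le> B" for x
    proof -
      have "\<bar>\<psi> x\<bar> \<le> norm (\<phi> x) * norm i" unfolding \<psi>_def by (rule Cauchy_Schwarz_ineq2)
      also have "\<dots> = norm (\<phi> x)" using i by simp
      finally show ?thesis using B[of x] by simp
    qed
    have "bounded (range \<psi>)" unfolding bounded_iff using b\<psi> by auto
    then have \<psi>b: "\<psi> \<in> bcont" using c\<psi> by (simp add: bcont_def)
    have m\<psi>: "\<psi> \<in> borel_measurable borel" by (rule borel_measurable_continuous_onI[OF c\<psi>])
    have i1: "integrable M (\<lambda>x. \<psi> x *\<^sub>R b x)"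
      by (rule int_scale_bdd[OF ib meas_borel[OF sM m\<psi>] b\<psi>])
    have i2: "integrable N (\<lambda>p. \<psi> (v p) *\<^sub>R u p)"
      by (rule int_scale_bdd[OF iu measurable_compose[OF v m\<psi>] b\<psi>])
    have "(\<integral>x. (\<phi> x \<bullet> i) * (b x \<bullet> i) \<partial>M) = (\<integral>x. (\<psi> x *\<^sub>R b x) \<bullet> i \<partial>M)"
      unfolding \<psi>_def by simp
    also have "\<dots> = (\<integral>x. \<psi> x *\<^sub>R b x \<partial>M) \<bullet> i" by (rule integral_inner_left) (rule i1)
    also have "\<dots> = (\<integral>p. \<psi> (v p) *\<^sub>R u p \<partial>N) \<bullet> i" using eq \<psi>b by simp
    also have "\<dots> = (\<integral>p. (\<psi> (v p) *\<^sub>R u p) \<bullet> i \<partial>N)" by (rule integral_inner_left[symmetric]) (rule i2)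
    also have "\<dots> = (\<integral>p. (\<phi> (v p) \<bullet> i) * (u p \<bullet> i) \<partial>N)" unfolding \<psi>_def by simp
    finally show ?thesis .
  qed
  have bi: "\<bar>\<phi> x \<bullet> i\<bar> \<le> B" if i: "i \<in> Basis" for x i
  proof -
    have "\<bar>\<phi> x \<bullet> i\<bar> \<le> norm (\<phi> x) * norm i" by (rule Cauchy_Schwarz_ineq2)
    also have "\<dots> = norm (\<phi> x)" using i by simp
    finally show ?thesis using B[of x] by simp
  qed
  have mi: "(\<lambda>x. \<phi> x \<bullet> i) \<in> borel_measurable borel" for i
    by (intro borel_measurable_continuous_onI continuous_intros c\<phi>)
  have intM: "integrable M (\<lambda>x. (\<phi> x \<bullet> i) * (b x \<bullet> i))" if "i \<in> Basis" for i
  proof -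
    have "integrable M (\<lambda>x. (\<phi> x \<bullet> i) *\<^sub>R b x)"
      by (rule int_scale_bdd[OF ib meas_borel[OF sM mi] bi[OF that]])
    then have "integrable M (\<lambda>x. ((\<phi> x \<bullet> i) *\<^sub>R b x) \<bullet> i)" by (rule integrable_inner_left)
    then show ?thesis by simp
  qed
  have intN: "integrable N (\<lambda>p. (\<phi> (v p) \<bullet> i) * (u p \<bullet> i))" if "i \<in> Basis" for i
  proof -
    have "integrable N (\<lambda>p. (\<phi> (v p) \<bullet> i) *\<^sub>R u p)"
      by (rule int_scale_bdd[OF iu measurable_compose[OF v mi] bi[OF that]])
    then have "integrable N (\<lambda>p. ((\<phi> (v p) \<bullet> i) *\<^sub>R u p) \<bullet> i)" by (rule integrable_inner_left)
    then show ?thesis by simp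
  qed
  have "(\<integral>x. \<phi> x \<bullet> b x \<partial>M) = (\<integral>x. (\<Sum>i\<in>Basis. (\<phi> x \<bullet> i) * (b x \<bullet> i)) \<partial>M)"
    by (rule Bochner_Integration.integral_cong[OF refl]) (rule euclidean_inner)
  also have "\<dots> = (\<Sum>i\<in>Basis. (\<integral>x. (\<phi> x \<bullet> i) * (b x \<bullet> i) \<partial>M))"
    by (rule Bochner_Integration.integral_sum[where f="\<lambda>i x. (\<phi> x \<bullet> i) * (b x \<bullet> i)"]) (rule intM)
  also have "\<dots> = (\<Sum>i\<in>Basis. (\<integral>p. (\<phi> (v p) \<bullet> i) * (u p \<bullet> i) \<partial>N))"
    by (rule sum.cong[OF refl per])
  also have "\<dots> = (\<integral>p. (\<Sum>i\<in>Basis. (\<phi> (v p) \<bullet> i) * (u p \<bullet> i)) \<partial>N)"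
    by (rule Bochner_Integration.integral_sum[where f="\<lambda>i p. (\<phi> (v p) \<bullet> i) * (u p \<bullet> i)", symmetric]) (rule intN)
  also have "\<dots> = (\<integral>p. \<phi> (v p) \<bullet> u p \<partial>N)"
    by (rule Bochner_Integration.integral_cong[OF refl]) (rule euclidean_inner[symmetric])
  finally show ?thesis .
qed

lemma Cc_meas: assumes "\<phi> \<in> Cc" shows "\<phi> \<in> borel_measurable borel"
  by (rule borel_measurable_continuous_onI[OF Cc_uc(3)[OF assms]])

lemma int_phi:
  fixes f :: "'b \<Rightarrow> 'a::euclidean_space"
  assumes "\<phi> \<in> Cc" "integrable M f" "v \<in> measurable M borel"
  shows "integrable M (\<lambda>p. \<phi> (v p) \<bullet> f p)"
proof -
  obtain B where B: "\<And>x. norm (\<phi> x) \<le> B" using Cc_uc(2)[OF assms(1)] by blast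
  show ?thesis by (rule int_inner_bdd[OF assms(2) measurable_compose[OF assms(3) Cc_meas[OF assms(1)]] B])
qed

lemma vmeas_fst:
  fixes \<gamma> :: "('a::euclidean_space \<times> 'a) measure"
  assumes g: "\<gamma> \<in> couplings \<mu> \<nu>" and P: "\<mu> \<in> P2" "\<nu> \<in> P2" and b: "is_bary_fst \<gamma> \<mu> b" and \<phi>: "\<phi> \<in> Cc"
  shows "vmeas \<mu> (\<lambda>x. (1/t) *\<^sub>R (x - b x)) \<phi> = (1/t) * ((\<integral>p. \<phi> (fst p) \<bullet> fst p \<partial>\<gamma>) - (\<integral>p. \<phi> (fst p) \<bullet> snd p \<partial>\<gamma>))"
proof -
  have sM: "sets \<mu> = sets borel" using P2D(2)[OF P(1)] .
  have ib: "integrable \<mu> b" using b by (simp add: is_bary_fst_def)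
  have i1: "integrable \<mu> (\<lambda>x. \<phi> x \<bullet> x)"
    using int_phi[OF \<phi> P2_int_id[OF P(1)], of "\<lambda>x. x"] sM by (simp add: measurable_ident_sets)
  have i2: "integrable \<mu> (\<lambda>x. \<phi> x \<bullet> b x)"
    using int_phi[OF \<phi> ib, of "\<lambda>x. x"] sM by (simp add: measurable_ident_sets)
  have "vmeas \<mu> (\<lambda>x. (1/t) *\<^sub>R (x - b x)) \<phi> = (\<integral>x. (1/t) * (\<phi> x \<bullet> x - \<phi> x \<bullet> b x) \<partial>\<mu>)"
    unfolding vmeas_def using \<phi> by (simp add: inner_diff_right)
  also have "\<dots> = (1/t) * ((\<integral>x. \<phi> x \<bullet> x \<partial>\<mu>) - (\<integral>x. \<phi> x \<bullet> b x \<partial>\<mu>))"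
    using i1 i2 by simp
  also have "(\<integral>x. \<phi> x \<bullet> x \<partial>\<mu>) = (\<integral>p. \<phi> (fst p) \<bullet> fst p \<partial>\<gamma>)"
  proof -
    have m: "(\<lambda>x. \<phi> x \<bullet> x) \<in> borel_measurable borel"
      by (intro borel_measurable_continuous_onI continuous_intros Cc_uc(3)[OF \<phi>])
    show ?thesis using coup_int(2)[OF g m] .
  qed
  also have "(\<integral>x. \<phi> x \<bullet> b x \<partial>\<mu>) = (\<integral>p. \<phi> (fst p) \<bullet> snd p \<partial>\<gamma>)"
    by (rule bary_gen[OF sM ib coup_P2(2)[OF g P] coup_fst(1)[OF g] _ \<phi>]) (use b in \<open>simp add: is_bary_fst_def\<close>)
  finally show ?thesis .
qed

lemma vmeas_snd:
  fixes \<gamma> :: "('a::euclidean_space \<times> 'a) measure"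
  assumes g: "\<gamma> \<in> couplings \<mu> \<nu>" and P: "\<mu> \<in> P2" "\<nu> \<in> P2" and c: "is_bary_snd \<gamma> \<nu> c" and \<phi>: "\<phi> \<in> Cc"
  shows "vmeas \<nu> (\<lambda>y. (1/t) *\<^sub>R (c y - y)) \<phi> = (1/t) * ((\<integral>p. \<phi> (snd p) \<bullet> fst p \<partial>\<gamma>) - (\<integral>p. \<phi> (snd p) \<bullet> snd p \<partial>\<gamma>))"
proof -
  have sM: "sets \<nu> = sets borel" using P2D(2)[OF P(2)] .
  have ic: "integrable \<nu> c" using c by (simp add: is_bary_snd_def)
  have i1: "integrable \<nu> (\<lambda>x. \<phi> x \<bullet> x)"
    using int_phi[OF \<phi> P2_int_id[OF P(2)], of "\<lambda>x. x"] sM by (simp add: measurable_ident_sets)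
  have i2: "integrable \<nu> (\<lambda>x. \<phi> x \<bullet> c x)"
    using int_phi[OF \<phi> ic, of "\<lambda>x. x"] sM by (simp add: measurable_ident_sets)
  have "vmeas \<nu> (\<lambda>y. (1/t) *\<^sub>R (c y - y)) \<phi> = (\<integral>x. (1/t) * (\<phi> x \<bullet> c x - \<phi> x \<bullet> x) \<partial>\<nu>)"
    unfolding vmeas_def using \<phi> by (simp add: inner_diff_right)
  also have "\<dots> = (1/t) * ((\<integral>x. \<phi> x \<bullet> c x \<partial>\<nu>) - (\<integral>x. \<phi> x \<bullet> x \<partial>\<nu>))"
    using i1 i2 by simp
  also have "(\<integral>x. \<phi> x \<bullet> x \<partial>\<nu>) = (\<integral>p. \<phi> (snd p) \<bullet> snd p \<partial>\<gamma>)"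
  proof -
    have m: "(\<lambda>x. \<phi> x \<bullet> x) \<in> borel_measurable borel"
      by (intro borel_measurable_continuous_onI continuous_intros Cc_uc(3)[OF \<phi>])
    show ?thesis using coup_int(4)[OF g m] .
  qed
  also have "(\<integral>x. \<phi> x \<bullet> c x \<partial>\<nu>) = (\<integral>p. \<phi> (snd p) \<bullet> fst p \<partial>\<gamma>)"
    by (rule bary_gen[OF sM ic coup_P2(1)[OF g P] coup_fst(2)[OF g] _ \<phi>]) (use c in \<open>simp add: is_bary_snd_def\<close>)
  finally show ?thesis .
qed

lemma vmeas_diff:
  fixes \<gamma> :: "('a::euclidean_space \<times> 'a) measure"
  assumes g: "\<gamma> \<in> couplings \<mu> \<nu>" and P: "\<mu> \<in> P2" "\<nu> \<in> P2" and b: "is_bary_fst \<gamma> \<mu> b"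
    and c: "is_bary_snd \<gamma> \<nu> c" and \<phi>: "\<phi> \<in> Cc"
  shows "vmeas \<mu> (\<lambda>x. (1/t) *\<^sub>R (x - b x)) \<phi> - vmeas \<nu> (\<lambda>y. (1/t) *\<^sub>R (c y - y)) \<phi>
     = (1/t) * (\<integral>p. (\<phi> (fst p) - \<phi> (snd p)) \<bullet> (fst p - snd p) \<partial>\<gamma>)"
proof -
  have A: "integrable \<gamma> (\<lambda>p. \<phi> (fst p) \<bullet> fst p)" by (rule int_phi[OF \<phi> coup_P2(1)[OF g P] coup_fst(1)[OF g]])
  have B: "integrable \<gamma> (\<lambda>p. \<phi> (fst p) \<bullet> snd p)" by (rule int_phi[OF \<phi> coup_P2(2)[OF g P] coup_fst(1)[OF g]])
  have C: "integrable \<gamma> (\<lambda>p. \<phi> (snd p) \<bullet> fst p)" by (rule int_phi[OF \<phi> coup_P2(1)[OF g P] coup_fst(2)[OF g]])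
  have D: "integrable \<gamma> (\<lambda>p. \<phi> (snd p) \<bullet> snd p)" by (rule int_phi[OF \<phi> coup_P2(2)[OF g P] coup_fst(2)[OF g]])
  have "(\<integral>p. (\<phi> (fst p) - \<phi> (snd p)) \<bullet> (fst p - snd p) \<partial>\<gamma>)
      = (\<integral>p. (\<phi> (fst p) \<bullet> fst p - \<phi> (fst p) \<bullet> snd p) - (\<phi> (snd p) \<bullet> fst p - \<phi> (snd p) \<bullet> snd p) \<partial>\<gamma>)"
    by (rule Bochner_Integration.integral_cong[OF refl]) (simp add: inner_diff_left inner_diff_right)
  also have "\<dots> = ((\<integral>p. \<phi> (fst p) \<bullet> fst p \<partial>\<gamma>) - (\<integral>p. \<phi> (fst p) \<bullet> snd p \<partial>\<gamma>))
      - ((\<integral>p. \<phi> (snd p) \<bullet> fst p \<partial>\<gamma>) - (\<integral>p. \<phi> (snd p) \<bullet> snd p \<partial>\<gamma>))"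
    using A B C D by simp
  finally show ?thesis
    unfolding vmeas_fst[OF g P b \<phi>] vmeas_snd[OF g P c \<phi>] by (simp add: right_diff_distrib)
qed

lemma vmeas_est:
  fixes \<gamma> :: "('a::euclidean_space \<times> 'a) measure"
  assumes g: "\<gamma> \<in> couplings \<mu> \<nu>" and P: "\<mu> \<in> P2" "\<nu> \<in> P2" and b: "is_bary_fst \<gamma> \<mu> b"
    and c: "is_bary_snd \<gamma> \<nu> c" and \<phi>: "\<phi> \<in> Cc" and t: "t > 0"
    and pw: "\<And>x y. \<bar>(\<phi> x - \<phi> y) \<bullet> (x - y)\<bar> \<le> a + k * norm (x - y)^2"
  shows "\<bar>vmeas \<mu> (\<lambda>x. (1/t) *\<^sub>R (x - b x)) \<phi> - vmeas \<nu> (\<lambda>y. (1/t) *\<^sub>R (c y - y)) \<phi>\<bar>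
     \<le> (1/t) * (a + k * transport_cost \<gamma>)"
proof -
  have iG: "integrable \<gamma> (\<lambda>p. (\<phi> (fst p) - \<phi> (snd p)) \<bullet> (fst p - snd p))"
  proof -
    obtain B where B: "\<And>x. norm (\<phi> x) \<le> B" using Cc_uc(2)[OF \<phi>] by blast
    have "norm (\<phi> (fst p) - \<phi> (snd p)) \<le> 2 * B" for p
      using norm_triangle_ineq4[of "\<phi> (fst p)" "\<phi> (snd p)"] B[of "fst p"] B[of "snd p"] by simp
    moreover have "(\<lambda>p. \<phi> (fst p) - \<phi> (snd p)) \<in> borel_measurable \<gamma>"
      using measurable_compose[OF coup_fst(1)[OF g] Cc_meas[OF \<phi>]] measurable_compose[OF coup_fst(2)[OF g] Cc_meas[OF \<phi>]]
      by (rule borel_measurable_diff)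
    moreover have "integrable \<gamma> (\<lambda>p. fst p - snd p)" using coup_P2(1,2)[OF g P] by (rule Bochner_Integration.integrable_diff)
    ultimately show ?thesis using int_inner_bdd by blast
  qed
  have "\<bar>\<integral>p. (\<phi> (fst p) - \<phi> (snd p)) \<bullet> (fst p - snd p) \<partial>\<gamma>\<bar> \<le> a + k * (\<integral>p. norm (fst p - snd p)^2 \<partial>\<gamma>)"
    by (rule est_gen[OF coupD(1)[OF g] iG coup_P2(3)[OF g P]]) (rule pw)
  then show ?thesis
    unfolding vmeas_diff[OF g P b c \<phi>] transport_cost_def using t by (simp add: abs_mult divide_le_cancel)
qed

lemma fun_est:
  fixes \<gamma> :: "('a::euclidean_space \<times> 'a) measure" and h :: "'a \<Rightarrow> real"
  assumes g: "\<gamma> \<in> couplings \<mu> \<nu>" and P: "\<mu> \<in> P2" "\<nu> \<in> P2" and mh: "h \<in> borel_measurable borel"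
    and B: "\<And>x. \<bar>h x\<bar> \<le> B"
    and pw: "\<And>x y. \<bar>h x - h y\<bar> \<le> a + k * norm (x - y)^2"
  shows "\<bar>(\<integral>x. h x \<partial>\<nu>) - (\<integral>x. h x \<partial>\<mu>)\<bar> \<le> a + k * transport_cost \<gamma>"
proof -
  interpret prob_space \<gamma> by (rule coupD(1)[OF g])
  have i1: "integrable \<gamma> (\<lambda>p. h (snd p))"
    by (rule integrable_const_bound[where B=B]) (use B measurable_compose[OF coup_fst(2)[OF g] mh] in auto)
  have i2: "integrable \<gamma> (\<lambda>p. h (fst p))"
    by (rule integrable_const_bound[where B=B]) (use B measurable_compose[OF coup_fst(1)[OF g] mh] in auto)
  have "(\<integral>x. h x \<partial>\<nu>) - (\<integral>x. h x \<partial>\<mu>) = (\<integral>p. h (snd p) - h (fst p) \<partial>\<gamma>)"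
    unfolding coup_int(2,4)[OF g mh] using i1 i2 by simp
  also have "\<bar>\<dots>\<bar> \<le> a + k * (\<integral>p. norm (fst p - snd p)^2 \<partial>\<gamma>)"
    by (rule est_gen[OF coupD(1)[OF g] _ coup_P2(3)[OF g P]]) (use i1 i2 in simp, metis pw norm_minus_commute)
  finally show ?thesis unfolding transport_cost_def .
qed

lemma cost_nonneg: "0 \<le> transport_cost \<gamma>"
  unfolding transport_cost_def by (rule Bochner_Integration.integral_nonneg) simp

lemma W2sq_props: assumes "\<gamma> \<in> couplings \<mu> \<nu>"
  shows "0 \<le> W2sq \<mu> \<nu>" "W2sq \<mu> \<nu> \<le> transport_cost \<gamma>"
proof -
  have ne: "transport_cost ` couplings \<mu> \<nu> \<noteq> {}" using assms by blast
  show "0 \<le> W2sq \<mu> \<nu>" unfolding W2sq_def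
    by (rule cInf_greatest[OF ne]) (auto simp: cost_nonneg)
  show "W2sq \<mu> \<nu> \<le> transport_cost \<gamma>" unfolding W2sq_def
    by (rule cInf_lower) (use assms cost_nonneg in \<open>auto simp: bdd_below_def\<close>)
qed

lemma W2sq_le: assumes "\<gamma> \<in> couplings \<mu> \<nu>" "W2 \<mu> \<nu> \<le> C * t"
  shows "W2sq \<mu> \<nu> \<le> C^2 * t^2" "0 \<le> C * t"
proof -
  have w0: "0 \<le> W2sq \<mu> \<nu>" by (rule W2sq_props(1)[OF assms(1)])
  have "0 \<le> W2 \<mu> \<nu>" using w0 unfolding W2_def by simp
  then show ct: "0 \<le> C * t" using assms(2) by linarith
  have "W2sq \<mu> \<nu> = (W2 \<mu> \<nu>)^2" unfolding W2_def using w0 by simp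
  also have "\<dots> \<le> (C * t)^2" using assms(2) \<open>0 \<le> W2 \<mu> \<nu>\<close> by (intro power_mono) auto
  finally show "W2sq \<mu> \<nu> \<le> C^2 * t^2" by (simp add: power_mult_distrib)
qed

lemma W2_good_coupling:
  assumes "\<mu> \<in> P2" "\<nu> \<in> P2" "W2 \<mu> \<nu> \<le> C * t" "t > 0"
  shows "\<exists>\<gamma>\<in>couplings \<mu> \<nu>. transport_cost \<gamma> \<le> (C^2 + 1) * t^2"
proof -
  have g0: "\<mu> \<Otimes>\<^sub>M \<nu> \<in> couplings \<mu> \<nu>" by (rule prod_coupling[OF assms(1,2)])
  have ne: "transport_cost ` couplings \<mu> \<nu> \<noteq> {}" using g0 by blast
  have le: "W2sq \<mu> \<nu> \<le> C^2 * t^2" by (rule W2sq_le(1)[OF g0 assms(3)])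
  have "Inf (transport_cost ` couplings \<mu> \<nu>) < W2sq \<mu> \<nu> + t^2" unfolding W2sq_def using assms(4) by simp
  from cInf_lessD[OF ne this] obtain \<gamma> where "\<gamma> \<in> couplings \<mu> \<nu>" "transport_cost \<gamma> < W2sq \<mu> \<nu> + t^2" by blast
  then show ?thesis using le by (intro bexI[of _ \<gamma>]) (auto simp: algebra_simps)
qed

lemma int_bdd:
  fixes h :: "'a::euclidean_space \<Rightarrow> real"
  assumes "prob_space m" "sets m = sets borel" "continuous_on UNIV h" "\<And>x. \<bar>h x\<bar> \<le> B"
  shows "integrable m h"
proof -
  interpret prob_space m by (rule assms(1))
  show ?thesis
    by (rule integrable_const_bound[where B=B]) (use assms(4) meas_borel[OF assms(2) borel_measurable_continuous_onI[OF assms(3)]] in auto)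
qed

lemma cutoff_cont: "continuous_on UNIV (cutoff R)"
  by (rule uniformly_continuous_imp_continuous[OF cutoff_uc])

lemma cutoff_abs: "\<bar>cutoff R x\<bar> \<le> 1"
  by (metis abs_of_nonneg cutoff_props(1,2))

lemma cutoff_lim:
  fixes m :: "'a::euclidean_space measure"
  assumes "prob_space m" "sets m = sets borel"
  shows "(\<lambda>R::nat. \<integral>x. cutoff (real R) x \<partial>m) \<longlonglongrightarrow> 1"
proof -
  interpret prob_space m by (rule assms(1))
  have "(\<lambda>R::nat. \<integral>x. cutoff (real R) x \<partial>m) \<longlonglongrightarrow> (\<integral>x. 1 \<partial>m)"
  proof (rule integral_dominated_convergence[where w="\<lambda>x. 1"])
    show "(\<lambda>x. 1::real) \<in> borel_measurable m" by simp
    show "\<And>i. (\<lambda>x. cutoff (real i) x) \<in> borel_measurable m"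
      by (rule meas_borel[OF assms(2) borel_measurable_continuous_onI[OF cutoff_cont]])
    show "integrable m (\<lambda>x. 1::real)" by simp
    show "AE x in m. (\<lambda>i. cutoff (real i) x) \<longlonglongrightarrow> 1"
    proof (rule AE_I2)
      fix x :: 'a
      obtain N :: nat where "norm x \<le> real N" using real_arch_simple by blast
      then have "\<forall>\<^sub>F i in sequentially. cutoff (real i) x = 1"
        unfolding eventually_sequentially by (intro exI[of _ N]) (auto intro!: cutoff_props(3))
      then show "(\<lambda>i. cutoff (real i) x) \<longlonglongrightarrow> 1" by (rule tendsto_eventually)
    qed
    show "\<And>i. AE x in m. norm (cutoff (real i) x) \<le> 1"
      by (intro AE_I2) (metis abs_of_nonneg cutoff_props(1,2) real_norm_def)
  qed
  then show ?thesis using prob_space by simp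
qed

lemma tail_est:
  fixes f :: "'a::euclidean_space \<Rightarrow> real"
  assumes "prob_space m" "sets m = sets borel" "continuous_on UNIV f" "\<And>x. \<bar>f x\<bar> \<le> M"
  shows "\<bar>(\<integral>x. f x \<partial>m) - (\<integral>x. f x * cutoff R x \<partial>m)\<bar> \<le> M * (1 - (\<integral>x. cutoff R x \<partial>m))"
proof -
  interpret prob_space m by (rule assms(1))
  have i1: "integrable m f" by (rule int_bdd[OF assms])
  have i2: "integrable m (cutoff R)" by (rule int_bdd[OF assms(1,2) cutoff_cont, of _ 1]) (rule cutoff_abs)
  have b3: "\<bar>f x * cutoff R x\<bar> \<le> M" for x
  proof -
    have "\<bar>f x\<bar> * \<bar>cutoff R x\<bar> \<le> M * 1"
      by (rule mult_mono) (use assms(4)[of x] cutoff_abs[of R x] in auto)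
    then show ?thesis by (simp add: abs_mult)
  qed
  have c3: "continuous_on UNIV (\<lambda>x. f x * cutoff R x)" by (intro continuous_intros assms(3) cutoff_cont)
  have i3: "integrable m (\<lambda>x. f x * cutoff R x)" by (rule int_bdd[OF assms(1,2) c3 b3])
  have "\<bar>(\<integral>x. f x \<partial>m) - (\<integral>x. f x * cutoff R x \<partial>m)\<bar> = \<bar>\<integral>x. f x * (1 - cutoff R x) \<partial>m\<bar>"
    using i1 i3 by (simp add: right_diff_distrib)
  also have "\<dots> \<le> (\<integral>x. \<bar>f x * (1 - cutoff R x)\<bar> \<partial>m)" by (rule integral_abs_bound)
  also have "\<dots> \<le> (\<integral>x. M * (1 - cutoff R x) \<partial>m)"
  proof (rule integral_mono)
    show "integrable m (\<lambda>x. \<bar>f x * (1 - cutoff R x)\<bar>)" using i1 i3 by (simp add: right_diff_distrib)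
    show "integrable m (\<lambda>x. M * (1 - cutoff R x))" using i2 by simp
    fix x
    have "\<bar>f x * (1 - cutoff R x)\<bar> = \<bar>f x\<bar> * (1 - cutoff R x)" using cutoff_props(2)[of R x] by (simp add: abs_mult)
    also have "\<dots> \<le> M * (1 - cutoff R x)" using assms(4)[of x] cutoff_props(2)[of R x] by (intro mult_right_mono) auto
    finally show "\<bar>f x * (1 - cutoff R x)\<bar> \<le> M * (1 - cutoff R x)" .
  qed
  also have "\<dots> = M * (1 - (\<integral>x. cutoff R x \<partial>m))" using i2 prob_space by (simp add: right_diff_distrib)
  finally show ?thesis .
qed

lemma diff_to_zero:
  fixes h :: "'a::euclidean_space \<Rightarrow> real"
  assumes g: "\<And>n. \<gamma>s n \<in> couplings (\<mu>s n) (\<nu>s n)" and P: "\<And>n. \<mu>s n \<in> P2" "\<And>n. \<nu>s n \<in> P2"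
    and cost: "\<And>n. transport_cost (\<gamma>s n) \<le> K * \<tau> n ^ 2" and \<tau>: "\<tau> \<longlonglongrightarrow> 0"
    and uc: "uniformly_continuous_on UNIV h" and B: "\<And>x. \<bar>h x\<bar> \<le> B"
  shows "(\<lambda>n. (\<integral>x. h x \<partial>\<nu>s n) - (\<integral>x. h x \<partial>\<mu>s n)) \<longlonglongrightarrow> 0"
  unfolding tendsto_iff
proof (intro allI impI)
  fix e :: real assume e: "e > 0"
  have B0: "0 \<le> B" using B[of undefined] by linarith
  obtain \<delta> where d: "\<delta> > 0" "\<And>x y. norm (h x - h y) \<le> e/2 + (2*B/\<delta>^2) * norm (x - y)^2"
    using uc_bound[OF uc, of B "e/2"] B e by auto
  have mh: "h \<in> borel_measurable borel" by (rule borel_measurable_continuous_onI[OF uniformly_continuous_imp_continuous[OF uc]])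
  have "(\<lambda>n. (2*B/\<delta>^2) * (K * \<tau> n ^ 2)) \<longlonglongrightarrow> (2*B/\<delta>^2) * (K * 0 ^ 2)"
    by (intro tendsto_intros \<tau>)
  then have "(\<lambda>n. (2*B/\<delta>^2) * (K * \<tau> n ^ 2)) \<longlonglongrightarrow> 0" by simp
  then have "\<forall>\<^sub>F n in sequentially. (2*B/\<delta>^2) * (K * \<tau> n ^ 2) < e/2"
    by (rule order_tendstoD(2)) (use e in simp)
  then show "\<forall>\<^sub>F n in sequentially. dist ((\<integral>x. h x \<partial>\<nu>s n) - (\<integral>x. h x \<partial>\<mu>s n)) 0 < e"
  proof (rule eventually_mono)
    fix n assume n: "(2*B/\<delta>^2) * (K * \<tau> n ^ 2) < e/2"
    have "\<bar>(\<integral>x. h x \<partial>\<nu>s n) - (\<integral>x. h x \<partial>\<mu>s n)\<bar> \<le> e/2 + (2*B/\<delta>^2) * transport_cost (\<gamma>s n)"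
      by (rule fun_est[OF g P mh B]) (use d(2) in simp)
    also have "\<dots> \<le> e/2 + (2*B/\<delta>^2) * (K * \<tau> n ^ 2)"
      using cost[of n] B0 d(1) by (intro add_left_mono mult_left_mono) auto
    finally show "dist ((\<integral>x. h x \<partial>\<nu>s n) - (\<integral>x. h x \<partial>\<mu>s n)) 0 < e" using n by simp
  qed
qed

lemma amgm: assumes "t > 0" shows "(d::real) \<le> t/2 + d^2/(2*t)"
proof -
  have "0 \<le> (t - d)^2" by simp
  then have "2*t*d \<le> t^2 + d^2" by (simp add: power2_eq_square algebra_simps)
  then show ?thesis using assms by (simp add: field_simps power2_eq_square)
qed

lemma part2_lim:
  fixes \<gamma> :: "nat \<Rightarrow> ('a::euclidean_space \<times> 'a) measure"
  assumes \<tau>pos: "\<And>n. \<tau> n > 0" and \<tau>: "\<tau> \<longlonglongrightarrow> 0"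
    and P: "\<And>n. \<mu>s n \<in> P2" "\<And>n. \<nu>s n \<in> P2"
    and W: "\<And>n. W2 (\<mu>s n) (\<nu>s n) \<le> C * \<tau> n"
    and H: "\<forall>n. \<gamma> n \<in> opt_couplings (\<mu>s n) (\<nu>s n)
                 \<and> is_bary_fst (\<gamma> n) (\<mu>s n) (b n) \<and> is_bary_snd (\<gamma> n) (\<nu>s n) (c n)"
  shows "(\<lambda>n. vmeas (\<mu>s n) (\<lambda>x. (1 / \<tau> n) *\<^sub>R (x - b n x)) \<phi> - vmeas (\<nu>s n) (\<lambda>y. (1 / \<tau> n) *\<^sub>R (c n y - y)) \<phi>) \<longlonglongrightarrow> 0"
proof (cases "\<phi> \<in> Cc")
  case False
  then show ?thesis by (simp add: vmeas_def)
next
  case \<phi>: True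
  have g: "\<gamma> n \<in> couplings (\<mu>s n) (\<nu>s n)" for n using H by (simp add: opt_couplings_def)
  have cost: "transport_cost (\<gamma> n) \<le> C^2 * \<tau> n ^ 2" for n
    using H W2sq_le(1)[OF g W] by (simp add: opt_couplings_def)
  have C0: "0 \<le> C" using W2sq_le(2)[OF g W, of 0] \<tau>pos[of 0] by (simp add: zero_le_mult_iff)
  obtain B where B: "\<And>x. norm (\<phi> x) \<le> B" using Cc_uc(2)[OF \<phi>] by blast
  have B0: "0 \<le> B" using B[of 0] norm_ge_zero order_trans by blast
  show ?thesis unfolding tendsto_iff
  proof (intro allI impI)
    fix e :: real assume e: "e > 0"
    define \<epsilon> where "\<epsilon> = e / (1 + C^2)"
    have \<epsilon>: "\<epsilon> > 0" unfolding \<epsilon>_def using e by (simp add: add_pos_nonneg)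
    have pC: "1 + C^2 > 0" by (simp add: add_pos_nonneg)
    have \<epsilon>e: "\<epsilon> * (1 + C^2) = e" unfolding \<epsilon>_def using pC by simp
    obtain \<delta> where d: "\<delta> > 0" "\<And>x y. norm (\<phi> x - \<phi> y) \<le> \<epsilon> + (2*B/\<delta>) * norm (x - y)"
      using uc_bound[OF Cc_uc(1)[OF \<phi>] B \<epsilon>] by blast
    define K where "K = 2*B/\<delta>"
    have K0: "0 \<le> K" unfolding K_def using B0 d(1) by simp
    have "(\<lambda>n. K * C^2 * \<tau> n) \<longlonglongrightarrow> K * C^2 * 0" by (intro tendsto_intros \<tau>)
    then have "(\<lambda>n. K * C^2 * \<tau> n) \<longlonglongrightarrow> 0" by simp
    then have ev: "\<forall>\<^sub>F n in sequentially. K * C^2 * \<tau> n < e/2"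
      by (rule order_tendstoD(2)) (use e in simp)
    then show "\<forall>\<^sub>F n in sequentially. dist (vmeas (\<mu>s n) (\<lambda>x. (1 / \<tau> n) *\<^sub>R (x - b n x)) \<phi> - vmeas (\<nu>s n) (\<lambda>y. (1 / \<tau> n) *\<^sub>R (c n y - y)) \<phi>) 0 < e"
    proof (rule eventually_mono)
      fix n assume n: "K * C^2 * \<tau> n < e/2"
      define t where "t = \<tau> n"
      have t: "t > 0" unfolding t_def by (rule \<tau>pos)
      define k where "k = \<epsilon>/(2*t) + K"
      have k0: "0 \<le> k" unfolding k_def using \<epsilon> t K0 by simp
      have pw: "\<bar>(\<phi> x - \<phi> y) \<bullet> (x - y)\<bar> \<le> \<epsilon>*t/2 + k * norm (x - y)^2" for x y
      proof -
        define dd where "dd = norm (x - y)"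
        have dd0: "0 \<le> dd" unfolding dd_def by simp
        have "\<bar>(\<phi> x - \<phi> y) \<bullet> (x - y)\<bar> \<le> norm (\<phi> x - \<phi> y) * dd" unfolding dd_def by (rule Cauchy_Schwarz_ineq2)
        also have "\<dots> \<le> (\<epsilon> + K * dd) * dd" using d(2)[of x y] dd0 unfolding K_def dd_def by (intro mult_right_mono) auto
        also have "\<dots> = \<epsilon> * dd + K * dd^2" by (simp add: algebra_simps power2_eq_square)
        also have "\<dots> \<le> \<epsilon> * (t/2 + dd^2/(2*t)) + K * dd^2"
          using amgm[OF t, of dd] \<epsilon> by (intro add_right_mono mult_left_mono) auto
        also have "\<dots> = \<epsilon>*t/2 + k * dd^2" unfolding k_def by (simp add: algebra_simps)
        finally show ?thesis unfolding dd_def .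
      qed
      have "\<bar>vmeas (\<mu>s n) (\<lambda>x. (1 / t) *\<^sub>R (x - b n x)) \<phi> - vmeas (\<nu>s n) (\<lambda>y. (1 / t) *\<^sub>R (c n y - y)) \<phi>\<bar>
          \<le> (1/t) * (\<epsilon>*t/2 + k * transport_cost (\<gamma> n))"
        by (rule vmeas_est[OF g P _ _ \<phi> t pw]) (use H in auto)
      also have "\<dots> \<le> (1/t) * (\<epsilon>*t/2 + k * (C^2 * t^2))"
        using cost[of n] k0 t unfolding t_def by (intro mult_left_mono add_left_mono) auto
      also have "\<dots> = \<epsilon> * (1 + C^2) / 2 + K * C^2 * t"
        using t unfolding k_def by (simp add: field_simps power2_eq_square)
      also have "\<dots> < e" using \<epsilon>e n unfolding t_def by simp
      finally show "dist (vmeas (\<mu>s n) (\<lambda>x. (1 / \<tau> n) *\<^sub>R (x - b n x)) \<phi> - vmeas (\<nu>s n) (\<lambda>y. (1 / \<tau> n) *\<^sub>R (c n y - y)) \<phi>) 0 < e"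
        unfolding t_def by simp
    qed
  qed
qed

lemma part1:
  fixes \<mu>s \<nu>s :: "nat \<Rightarrow> 'a::euclidean_space measure"
  assumes \<tau>pos: "\<And>n. \<tau> n > 0" and \<tau>: "\<tau> \<longlonglongrightarrow> 0"
    and P: "\<And>n. \<mu>s n \<in> P2" "\<And>n. \<nu>s n \<in> P2"
    and W: "\<And>n. W2 (\<mu>s n) (\<nu>s n) \<le> C * \<tau> n"
    and \<mu>: "\<mu> \<in> Pborel" and nc: "narrow_conv \<mu>s \<mu>"
  shows "narrow_conv \<nu>s \<mu>"
proof -
  have "\<forall>n. \<exists>\<gamma>\<in>couplings (\<mu>s n) (\<nu>s n). transport_cost \<gamma> \<le> (C^2 + 1) * \<tau> n ^ 2"
    using W2_good_coupling[OF P W \<tau>pos] by blast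
  then obtain \<gamma>s where g: "\<And>n. \<gamma>s n \<in> couplings (\<mu>s n) (\<nu>s n)"
    and cost: "\<And>n. transport_cost (\<gamma>s n) \<le> (C^2 + 1) * \<tau> n ^ 2" by metis
  have D: "(\<lambda>n. (\<integral>x. h x \<partial>\<nu>s n) - (\<integral>x. h x \<partial>\<mu>s n)) \<longlonglongrightarrow> 0"
    if "uniformly_continuous_on UNIV h" "\<And>x. \<bar>h x\<bar> \<le> B" for h :: "'a \<Rightarrow> real" and B
    by (rule diff_to_zero[OF g P cost \<tau> that])
  have pm: "prob_space \<mu>" "sets \<mu> = sets borel" using \<mu> by (auto simp: Pborel_def)
  have pn: "prob_space (\<nu>s n)" "sets (\<nu>s n) = sets borel" for n using P2D[OF P(2)] by auto
  have pmu: "prob_space (\<mu>s n)" "sets (\<mu>s n) = sets borel" for n using P2D[OF P(1)] by auto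
  show ?thesis unfolding narrow_conv_def
  proof (intro ballI)
    fix f :: "'a \<Rightarrow> real" assume fb: "f \<in> bcont"
    have cf: "continuous_on UNIV f" using fb by (simp add: bcont_def)
    obtain M0 where M0: "\<And>x. norm (f x) \<le> M0" using fb unfolding bcont_def bounded_iff by blast
    define M where "M = max M0 0"
    have M: "\<And>x. \<bar>f x\<bar> \<le> M" "0 \<le> M" unfolding M_def using M0 by (auto intro: le_max_iff_disj[THEN iffD2])
    show "(\<lambda>n. \<integral>x. f x \<partial>\<nu>s n) \<longlonglongrightarrow> (\<integral>x. f x \<partial>\<mu>)" unfolding tendsto_iff
    proof (intro allI impI)
      fix e :: real assume e: "e > 0"
      define e' where "e' = e / (4*M + 4)"
      have e': "e' > 0" unfolding e'_def using e M(2) by simp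
      have fin: "(2 + 4*M) * e' < e" unfolding e'_def using e M(2) by (simp add: field_simps)
      from cutoff_lim[OF pm] e' obtain R :: nat where R: "\<bar>(\<integral>x. cutoff (real R) x \<partial>\<mu>) - 1\<bar> < e'"
        unfolding tendsto_iff dist_real_def eventually_sequentially by blast
      define g :: "'a \<Rightarrow> real" where "g = cutoff (real R)"
      define fg where "fg = (\<lambda>x. f x * g x)"
      have cg: "continuous_on UNIV g" unfolding g_def by (rule cutoff_cont)
      have ug: "uniformly_continuous_on UNIV g" unfolding g_def by (rule cutoff_uc)
      have bg: "\<bar>g x\<bar> \<le> 1" for x unfolding g_def by (rule cutoff_abs)
      have cfg: "continuous_on UNIV fg" unfolding fg_def by (intro continuous_intros cf cg)
      have bfg: "\<bar>fg x\<bar> \<le> M" for x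
      proof -
        have "\<bar>f x\<bar> * \<bar>g x\<bar> \<le> M * 1" by (rule mult_mono) (use M bg[of x] in auto)
        then show ?thesis by (simp add: fg_def abs_mult)
      qed
      have z: "fg x = 0" if "x \<notin> cball 0 (real R + 1)" for x
        using that cutoff_props(4)[of "real R" x] by (simp add: fg_def g_def)
      have ufg: "uniformly_continuous_on UNIV fg" using cs_uc(1)[OF cfg compact_cball z] .
      have fgb: "fg \<in> bcont" unfolding bcont_def bounded_iff using cfg bfg by auto
      have gb: "g \<in> bcont" unfolding bcont_def bounded_iff using cg bg by auto
      have l1: "(\<lambda>n. (\<integral>x. fg x \<partial>\<nu>s n) - (\<integral>x. fg x \<partial>\<mu>s n)) \<longlonglongrightarrow> 0" by (rule D[OF ufg bfg])
      have l2: "(\<lambda>n. (\<integral>x. g x \<partial>\<nu>s n) - (\<integral>x. g x \<partial>\<mu>s n)) \<longlonglongrightarrow> 0" by (rule D[OF ug bg])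
      have l3: "(\<lambda>n. \<integral>x. fg x \<partial>\<mu>s n) \<longlonglongrightarrow> (\<integral>x. fg x \<partial>\<mu>)" using nc fgb by (simp add: narrow_conv_def)
      have l4: "(\<lambda>n. \<integral>x. g x \<partial>\<mu>s n) \<longlonglongrightarrow> (\<integral>x. g x \<partial>\<mu>)" using nc gb by (simp add: narrow_conv_def)
      have ev: "\<forall>\<^sub>F n in sequentially. \<bar>(\<integral>x. fg x \<partial>\<nu>s n) - (\<integral>x. fg x \<partial>\<mu>s n)\<bar> < e'
          \<and> \<bar>(\<integral>x. g x \<partial>\<nu>s n) - (\<integral>x. g x \<partial>\<mu>s n)\<bar> < e'
          \<and> \<bar>(\<integral>x. fg x \<partial>\<mu>s n) - (\<integral>x. fg x \<partial>\<mu>)\<bar> < e'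
          \<and> \<bar>(\<integral>x. g x \<partial>\<mu>s n) - (\<integral>x. g x \<partial>\<mu>)\<bar> < e'"
        using l1 l2 l3 l4 e' unfolding tendsto_iff dist_real_def
        by (intro eventually_conj) (simp_all del: diff_0_right)
      then show "\<forall>\<^sub>F n in sequentially. dist (\<integral>x. f x \<partial>\<nu>s n) (\<integral>x. f x \<partial>\<mu>) < e"
      proof (rule eventually_mono)
        fix n assume n: "\<bar>(\<integral>x. fg x \<partial>\<nu>s n) - (\<integral>x. fg x \<partial>\<mu>s n)\<bar> < e'
          \<and> \<bar>(\<integral>x. g x \<partial>\<nu>s n) - (\<integral>x. g x \<partial>\<mu>s n)\<bar> < e'
          \<and> \<bar>(\<integral>x. fg x \<partial>\<mu>s n) - (\<integral>x. fg x \<partial>\<mu>)\<bar> < e'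
          \<and> \<bar>(\<integral>x. g x \<partial>\<mu>s n) - (\<integral>x. g x \<partial>\<mu>)\<bar> < e'"
        have t1: "\<bar>(\<integral>x. f x \<partial>\<nu>s n) - (\<integral>x. fg x \<partial>\<nu>s n)\<bar> \<le> M * (1 - (\<integral>x. g x \<partial>\<nu>s n))"
          unfolding fg_def g_def by (rule tail_est[OF pn cf M(1)])
        have t2: "\<bar>(\<integral>x. f x \<partial>\<mu>) - (\<integral>x. fg x \<partial>\<mu>)\<bar> \<le> M * (1 - (\<integral>x. g x \<partial>\<mu>))"
          unfolding fg_def g_def by (rule tail_est[OF pm cf M(1)])
        have "1 - (\<integral>x. g x \<partial>\<nu>s n) \<le> 3 * e'" using n R unfolding g_def by linarith
        then have t3: "M * (1 - (\<integral>x. g x \<partial>\<nu>s n)) \<le> M * (3 * e')" using M(2) by (rule mult_left_mono)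
        have "1 - (\<integral>x. g x \<partial>\<mu>) \<le> e'" using R unfolding g_def by linarith
        then have t4: "M * (1 - (\<integral>x. g x \<partial>\<mu>)) \<le> M * e'" using M(2) by (rule mult_left_mono)
        have "\<bar>(\<integral>x. f x \<partial>\<nu>s n) - (\<integral>x. f x \<partial>\<mu>)\<bar> < 2 * e' + M * (3 * e') + M * e'"
          using n t1 t2 t3 t4 by linarith
        also have "\<dots> = (2 + 4*M) * e'" by (simp add: algebra_simps)
        finally show "dist (\<integral>x. f x \<partial>\<nu>s n) (\<integral>x. f x \<partial>\<mu>) < e" using fin by (simp add: dist_real_def)
      qed
    qed
  qed
qed

theorem mainTheorem3:
  fixes H :: "('a::euclidean_space) measure \<Rightarrow> ereal"
    and \<tau> :: "nat \<Rightarrow> real"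
    and \<mu>s \<nu>s :: "nat \<Rightarrow> 'a measure"
    and \<mu> :: "'a measure"
    and C :: real
  assumes "proper_fun H"
    and "\<And>n. \<tau> n > 0"
    and "\<tau> \<longlonglongrightarrow> 0"
    and "\<And>n. \<mu>s n \<in> P2"
    and "\<And>n. \<nu>s n \<in> P2"
    and "\<And>n. \<nu>s n \<in> Jtau H (\<tau> n) (\<mu>s n)"
    and "\<And>n. W2 (\<mu>s n) (\<nu>s n) \<le> C * \<tau> n"
    and "\<mu> \<in> Pborel"
    and "narrow_conv \<mu>s \<mu>"
  shows "narrow_conv \<nu>s \<mu> \<and>
    (\<forall>\<gamma> b c. (\<forall>n. \<gamma> n \<in> opt_couplings (\<mu>s n) (\<nu>s n)
                 \<and> is_bary_fst (\<gamma> n) (\<mu>s n) (b n) \<and> is_bary_snd (\<gamma> n) (\<nu>s n) (c n)) \<longrightarrow>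
       (\<Inter>m. wstar_cch {vmeas (\<mu>s n) (\<lambda>x. (1 / \<tau> n) *\<^sub>R (x - b n x)) | n. n \<ge> m})
     = (\<Inter>m. wstar_cch {vmeas (\<nu>s n) (\<lambda>y. (1 / \<tau> n) *\<^sub>R (c n y - y)) | n. n \<ge> m}))"
proof (intro conjI allI impI)
  show "narrow_conv \<nu>s \<mu>" by (rule part1[OF assms(2,3,4,5,7,8,9)])
next
  fix \<gamma> b c
  assume Hg: "\<forall>n. \<gamma> n \<in> opt_couplings (\<mu>s n) (\<nu>s n)
                 \<and> is_bary_fst (\<gamma> n) (\<mu>s n) (b n) \<and> is_bary_snd (\<gamma> n) (\<nu>s n) (c n)"
  define L where "L = (\<lambda>n. vmeas (\<mu>s n) (\<lambda>x. (1 / \<tau> n) *\<^sub>R (x - b n x)))"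
  define L' where "L' = (\<lambda>n. vmeas (\<nu>s n) (\<lambda>y. (1 / \<tau> n) *\<^sub>R (c n y - y)))"
  have lim: "\<And>\<phi>. (\<lambda>n. L n \<phi> - L' n \<phi>) \<longlonglongrightarrow> 0"
    unfolding L_def L'_def by (rule part2_lim[OF assms(2,3,4,5,7) Hg])
  have lim': "\<And>\<phi>. (\<lambda>n. L' n \<phi> - L n \<phi>) \<longlonglongrightarrow> 0"
  proof -
    fix \<phi> have "(\<lambda>n. - (L n \<phi> - L' n \<phi>)) \<longlonglongrightarrow> - 0" by (intro tendsto_minus lim)
    then show "(\<lambda>n. L' n \<phi> - L n \<phi>) \<longlonglongrightarrow> 0" by simp
  qed
  have "(\<Inter>m. wstar_cch {L n | n. n \<ge> m}) = (\<Inter>m. wstar_cch {L' n | n. n \<ge> m})"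
  proof
    show "(\<Inter>m. wstar_cch {L n | n. n \<ge> m}) \<subseteq> (\<Inter>m. wstar_cch {L' n | n. n \<ge> m})"
    proof
      fix f assume "f \<in> (\<Inter>m. wstar_cch {L n | n. n \<ge> m})"
      then have a: "\<And>m. f \<in> closure (fconv_hull {L n | n. n \<ge> m})" "f \<in> Cc_dual"
        by (auto simp: wstar_cch_def)
      show "f \<in> (\<Inter>m. wstar_cch {L' n | n. n \<ge> m})"
        using conv_close[OF lim a(1)] a(2) by (auto simp: wstar_cch_def)
    qed
    show "(\<Inter>m. wstar_cch {L' n | n. n \<ge> m}) \<subseteq> (\<Inter>m. wstar_cch {L n | n. n \<ge> m})"
    proof
      fix f assume "f \<in> (\<Inter>m. wstar_cch {L' n | n. n \<ge> m})"
      then have a: "\<And>m. f \<in> closure (fconv_hull {L' n | n. n \<ge> m})" "f \<in> Cc_dual"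
        by (auto simp: wstar_cch_def)
      show "f \<in> (\<Inter>m. wstar_cch {L n | n. n \<ge> m})"
        using conv_close[OF lim' a(1)] a(2) by (auto simp: wstar_cch_def)
    qed
  qed
  then show "(\<Inter>m. wstar_cch {vmeas (\<mu>s n) (\<lambda>x. (1 / \<tau> n) *\<^sub>R (x - b n x)) | n. n \<ge> m})
     = (\<Inter>m. wstar_cch {vmeas (\<nu>s n) (\<lambda>y. (1 / \<tau> n) *\<^sub>R (c n y - y)) | n. n \<ge> m})"
    unfolding L_def L'_def .
qed

end
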